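(* Let $n\ge 2$, let $\tau$ be any permutation of $\{1,\dots,n\}$, let $G_n$ be the graph built from $\tau$ as in the context, and let $m$ be the vertex with $\tau(m)=1$. The greedy walk from $1$ to target $n$ in $G_n$ visits exactly: first all left-to-right minima positions of $\tau$ in increasing order from $1$ to $m$, then all right-to-left minima positions of $\tau$ strictly greater than $m$ in increasing order up to $n$. Consequently the number of steps $S_n$ of this walk satisfies \[ S_n = L_n(\tau)+R_n(\tau)-2 . \]
   Context: Vertices $V=\{1,\dots,n\}\subset\mathbb{Z}$. A permutation $\tau$ of $V$ gives insertion times: vertex $x$ is inserted at time $\tau(x)$. The undirected graph $G_n$ on $V$ is built as follows: start with no edges; for $t=1,\dots,n$, let $x$ be the vertex with $\tau(x)=t$; if some $y<x$ with $\tau(y)<t$ exists, add an edge between $x$ and the largest such $y$; if some $y>x$ with $\tau(y)<t$ exists, add an edge between $x$ and the smallest such $y$. The greedy walk toward target $n$ starts at $x_0=1$ and, from the current vertex $x\ne n$, moves to the neighbor $y$ of $x$ in $G_n$ minimizing $|y-n|$; it stops upon reaching $n$; $S_n$ is its number of moves. For a permutation $\sigma$ of $\{1,\dots,n\}$, position $i$ is a left-to-right minimum if $\sigma(i)<\min\{\sigma(1),\dots,\sigma(i-1)\}$ ($i=1$ always is), and a right-to-left minimum if $\sigma(i)<\min\{\sigma(i+1),\dots,\sigma(n)\}$ ($i=n$ always is); $L_n(\sigma)$ and $R_n(\sigma)$ are the numbers of left-to-right and right-to-left minima. *)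

theory Defs
  imports Main "HOL-Combinatorics.Permutations"
begin

text \<open>Vertices are 1..n (as nat). tau x is the insertion time of vertex x.\<close>

definition earlier_left :: "(nat \<Rightarrow> nat) \<Rightarrow> nat \<Rightarrow> nat \<Rightarrow> nat set" where
  "earlier_left tau n x = {y \<in> {1..n}. y < x \<and> tau y < tau x}"

definition earlier_right :: "(nat \<Rightarrow> nat) \<Rightarrow> nat \<Rightarrow> nat \<Rightarrow> nat set" where
  "earlier_right tau n x = {y \<in> {1..n}. x < y \<and> tau y < tau x}"

definition ins_link :: "(nat \<Rightarrow> nat) \<Rightarrow> nat \<Rightarrow> nat \<Rightarrow> nat \<Rightarrow> bool" where
  "ins_link tau n x y \<longleftrightarrow>
     (earlier_left tau n x \<noteq> {} \<and> y = Max (earlier_left tau n x)) \<or>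
     (earlier_right tau n x \<noteq> {} \<and> y = Min (earlier_right tau n x))"

definition gn_edge :: "(nat \<Rightarrow> nat) \<Rightarrow> nat \<Rightarrow> nat \<Rightarrow> nat \<Rightarrow> bool" where
  "gn_edge tau n x y \<longleftrightarrow> x \<in> {1..n} \<and> y \<in> {1..n} \<and>
     (ins_link tau n x y \<or> ins_link tau n y x)"

definition greedy_step :: "(nat \<Rightarrow> nat) \<Rightarrow> nat \<Rightarrow> nat \<Rightarrow> nat" where
  "greedy_step tau n x =
     (if x = n then n else ARG_MIN (\<lambda>y. \<bar>int y - int n\<bar>) y. gn_edge tau n x y)"

definition greedy_walk :: "(nat \<Rightarrow> nat) \<Rightarrow> nat \<Rightarrow> nat \<Rightarrow> nat" where
  "greedy_walk tau n k = (greedy_step tau n ^^ k) 1"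

definition greedy_steps :: "(nat \<Rightarrow> nat) \<Rightarrow> nat \<Rightarrow> nat" where
  "greedy_steps tau n = (LEAST k. greedy_walk tau n k = n)"

definition lr_min_pos :: "(nat \<Rightarrow> nat) \<Rightarrow> nat \<Rightarrow> nat set" where
  "lr_min_pos sigma n = {i \<in> {1..n}. \<forall>j \<in> {1..<i}. sigma i < sigma j}"

definition rl_min_pos :: "(nat \<Rightarrow> nat) \<Rightarrow> nat \<Rightarrow> nat set" where
  "rl_min_pos sigma n = {i \<in> {1..n}. \<forall>j \<in> {i<..n}. sigma i < sigma j}"

definition L_num :: "(nat \<Rightarrow> nat) \<Rightarrow> nat \<Rightarrow> nat" where
  "L_num sigma n = card (lr_min_pos sigma n)"

definition R_num :: "(nat \<Rightarrow> nat) \<Rightarrow> nat \<Rightarrow> nat" where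
  "R_num sigma n = card (rl_min_pos sigma n)"

end

theory Submission
  imports Defs
begin

locale gw =
  fixes n m :: nat and tau :: "nat \<Rightarrow> nat"
  assumes n2: "n \<ge> 2" and perm: "tau permutes {1..n}"
    and mI: "m \<in> {1..n}" and tm: "tau m = 1"
begin

lemma inj: "inj tau" using perm by (rule permutes_inj)

lemma trange: "x \<in> {1..n} \<Longrightarrow> tau x \<in> {1..n}"
  using permutes_in_image[OF perm] by blast

lemma tgt: "x \<in> {1..n} \<Longrightarrow> x \<noteq> m \<Longrightarrow> tau m < tau x"
  using trange[of x] inj tm by (metis atLeastAtMost_iff injD le_neq_implies_less)

lemma lr_le_m: "x \<in> lr_min_pos tau n \<Longrightarrow> x \<le> m"
proof (rule ccontr)
  assume a: "x \<in> lr_min_pos tau n" "\<not> x \<le> m"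
  then have "tau x < tau m" using mI unfolding lr_min_pos_def by auto
  moreover have "tau x \<in> {1..n}" using trange a unfolding lr_min_pos_def by auto
  ultimately show False using tm by simp
qed

lemma rl_ge_m: "x \<in> rl_min_pos tau n \<Longrightarrow> m \<le> x"
proof (rule ccontr)
  assume a: "x \<in> rl_min_pos tau n" "\<not> m \<le> x"
  then have "tau x < tau m" using mI unfolding rl_min_pos_def by auto
  moreover have "tau x \<in> {1..n}" using trange a unfolding rl_min_pos_def by auto
  ultimately show False using tm by simp
qed

lemma one_lr: "1 \<in> lr_min_pos tau n" using n2 unfolding lr_min_pos_def by auto
lemma n_rl: "n \<in> rl_min_pos tau n" using n2 unfolding rl_min_pos_def by auto
lemma m_rl: "m \<in> rl_min_pos tau n" using mI tgt unfolding rl_min_pos_def by auto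
lemma m_lr: "m \<in> lr_min_pos tau n" using mI tgt unfolding lr_min_pos_def by auto

definition P where "P = lr_min_pos tau n \<union> {i \<in> rl_min_pos tau n. m < i}"

lemma P_sub: "P \<subseteq> {1..n}" unfolding P_def lr_min_pos_def rl_min_pos_def by auto

lemma greedy_step_eq:
  assumes "x \<noteq> n" "s \<in> {1..n}" "gn_edge tau n x s" "\<forall>z. gn_edge tau n x z \<longrightarrow> z \<le> s"
  shows "greedy_step tau n x = s"
proof -
  have "is_arg_min (\<lambda>y. \<bar>int y - int n\<bar>) (gn_edge tau n x) s"
    unfolding is_arg_min_def
  proof (intro conjI notI)
    show "gn_edge tau n x s" by (rule assms(3))
    assume "\<exists>y. gn_edge tau n x y \<and> \<bar>int y - int n\<bar> < \<bar>int s - int n\<bar>"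
    then obtain y where y: "gn_edge tau n x y" "\<bar>int y - int n\<bar> < \<bar>int s - int n\<bar>" by blast
    have "y \<le> s" using y(1) assms(4) by blast
    moreover have "y \<le> n" using y(1) unfolding gn_edge_def by simp
    ultimately show False using y(2) assms(2) by simp
  qed
  moreover have "z = s" if "is_arg_min (\<lambda>y. \<bar>int y - int n\<bar>) (gn_edge tau n x) z" for z
  proof -
    have z1: "gn_edge tau n x z" "\<not> \<bar>int s - int n\<bar> < \<bar>int z - int n\<bar>"
      using that assms(3) unfolding is_arg_min_def by auto
    have "z \<le> s" using z1 assms(4) by blast
    moreover have "z \<le> n" using z1 unfolding gn_edge_def by auto
    ultimately show ?thesis using z1(2) assms(2) by auto
  qed
  ultimately have "arg_min (\<lambda>y. \<bar>int y - int n\<bar>) (gn_edge tau n x) = s"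
    unfolding arg_min_def by (rule some_equality)
  then show ?thesis unfolding greedy_step_def using assms(1) by simp
qed

lemma up_edge:
  assumes "x < z" "gn_edge tau n x z"
  shows "(earlier_right tau n x \<noteq> {} \<and> z = Min (earlier_right tau n x)) \<or>
         (tau x < tau z \<and> (\<forall>w. x < w \<and> w < z \<longrightarrow> \<not> tau w < tau z))"
proof -
  have fin: "finite (earlier_left tau n y)" "finite (earlier_right tau n y)" for y
    unfolding earlier_left_def earlier_right_def by auto
  have zn: "z \<in> {1..n}" "x \<in> {1..n}" using assms(2) unfolding gn_edge_def by auto
  consider "earlier_left tau n x \<noteq> {} \<and> z = Max (earlier_left tau n x)"
    | "earlier_right tau n x \<noteq> {} \<and> z = Min (earlier_right tau n x)"
    | "earlier_left tau n z \<noteq> {} \<and> x = Max (earlier_left tau n z)"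
    | "earlier_right tau n z \<noteq> {} \<and> x = Min (earlier_right tau n z)"
    using assms(2) unfolding gn_edge_def ins_link_def by blast
  then show ?thesis
  proof cases
    case 1
    then have "z \<in> earlier_left tau n x" using Max_in fin by metis
    then show ?thesis using assms(1) unfolding earlier_left_def by auto
  next
    case 2 then show ?thesis by blast
  next
    case 3
    then have xin: "x \<in> earlier_left tau n z" using Max_in fin by metis
    have "\<not> tau w < tau z" if "x < w" "w < z" for w
    proof
      assume "tau w < tau z"
      then have "w \<in> earlier_left tau n z" using that zn unfolding earlier_left_def by auto
      then have "w \<le> x" using 3 fin Max_ge by metis
      then show False using that by simp
    qed
    then show ?thesis using xin unfolding earlier_left_def by auto
  next
    case 4
    then have "x \<in> earlier_right tau n z" using Min_in fin by metis
    then show ?thesis using assms(1) unfolding earlier_right_def by auto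
  qed
qed

lemma case1:
  assumes "x \<in> lr_min_pos tau n" "x \<noteq> m"
  shows "\<exists>y\<in>P. x < y \<and> greedy_step tau n x = y \<and> (\<forall>t\<in>P. x < t \<longrightarrow> y \<le> t)"
proof -
  have xm: "x < m" using lr_le_m assms by fastforce
  have xI: "x \<in> {1..n}" using assms unfolding lr_min_pos_def by auto
  define E where "E = earlier_right tau n x"
  have finE: "finite E" unfolding E_def earlier_right_def by auto
  have mE: "m \<in> E" unfolding E_def earlier_right_def using mI xm tgt[OF xI assms(2)] by auto
  define r where "r = Min E"
  have rE: "r \<in> E" using r_def finE mE Min_in by blast
  have rm: "r \<le> m" using r_def finE mE by simp
  have rmin: "\<And>t. t \<in> E \<Longrightarrow> r \<le> t" using r_def finE by simp
  have r1: "r \<in> {1..n}" "x < r" "tau r < tau x" using rE unfolding E_def earlier_right_def by auto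
  have edge: "gn_edge tau n x r" unfolding gn_edge_def ins_link_def
    using xI r1 mE E_def r_def by blast
  have bound: "\<forall>z. gn_edge tau n x z \<longrightarrow> z \<le> r"
  proof (intro allI impI)
    fix z assume ez: "gn_edge tau n x z"
    show "z \<le> r"
    proof (cases "z \<le> x")
      case True then show ?thesis using r1 by simp
    next
      case False
      then have "x < z" by simp
      from up_edge[OF this ez] show ?thesis
      proof
        assume "earlier_right tau n x \<noteq> {} \<and> z = Min (earlier_right tau n x)"
        then show ?thesis using r_def E_def by simp
      next
        assume h: "tau x < tau z \<and> (\<forall>w. x < w \<and> w < z \<longrightarrow> \<not> tau w < tau z)"
        show ?thesis
        proof (rule ccontr)
          assume "\<not> z \<le> r"
          then have "x < r \<and> r < z" using r1 by simp
          then have "\<not> tau r < tau z" using h by blast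
          then show False using h r1 by simp
        qed
      qed
    qed
  qed
  have gs: "greedy_step tau n x = r"
    using greedy_step_eq[OF _ r1(1) edge bound] xm mI by auto
  have rlr: "r \<in> lr_min_pos tau n"
    unfolding lr_min_pos_def
  proof (intro CollectI conjI ballI)
    show "r \<in> {1..n}" using r1 by simp
    fix j assume j: "j \<in> {1..<r}"
    show "tau r < tau j"
    proof (cases "j < x")
      case True
      then have "tau x < tau j" using assms(1) j unfolding lr_min_pos_def by auto
      then show ?thesis using r1 by simp
    next
      case False
      show ?thesis
      proof (cases "j = x")
        case True then show ?thesis using r1 by simp
      next
        case False
        then have "x < j" using \<open>\<not> j < x\<close> by simp
        have "\<not> tau j < tau x"
        proof
          assume "tau j < tau x"
          then have "j \<in> E" unfolding E_def earlier_right_def using j r1 \<open>x < j\<close> by auto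
          then show False using rmin j by fastforce
        qed
        then show ?thesis using r1 by simp
      qed
    qed
  qed
  have rP: "r \<in> P" using rlr P_def by simp
  have minP: "\<forall>t\<in>P. x < t \<longrightarrow> r \<le> t"
  proof (intro ballI impI)
    fix t assume t: "t \<in> P" "x < t"
    show "r \<le> t"
    proof (cases "t \<in> lr_min_pos tau n")
      case True
      show ?thesis
      proof (rule ccontr)
        assume "\<not> r \<le> t"
        have "tau t < tau x" using True t xI unfolding lr_min_pos_def by auto
        then have "t \<in> E" using True t unfolding E_def earlier_right_def lr_min_pos_def by auto
        then show False using rmin \<open>\<not> r \<le> t\<close> by blast
      qed
    next
      case False
      then have "m < t" using t P_def by auto
      then show ?thesis using rm by simp
    qed
  qed
  show ?thesis using rP r1 gs minP by blast
qed

lemma case2: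
  assumes "x \<in> P" "m \<le> x" "x \<noteq> n"
  shows "\<exists>y\<in>P. x < y \<and> greedy_step tau n x = y \<and> (\<forall>t\<in>P. x < t \<longrightarrow> y \<le> t)"
proof -
  have xrl: "x \<in> rl_min_pos tau n"
    using assms m_rl lr_le_m unfolding P_def by (metis (mono_tags, lifting) Un_iff le_antisym mem_Collect_eq)
  have xI: "x \<in> {1..n}" using xrl unfolding rl_min_pos_def by auto
  have xn: "x < n" using xI assms(3) by simp
  define S where "S = {x<..n}"
  have "finite S" "S \<noteq> {}" using xn S_def by auto
  then obtain s where sS: "s \<in> S" and smin: "\<forall>w\<in>S. tau s \<le> tau w"
  proof -
    have "arg_min_on tau S \<in> S" using arg_min_if_finite(1)[OF \<open>finite S\<close> \<open>S \<noteq> {}\<close>] .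
    moreover have "\<forall>w\<in>S. tau (arg_min_on tau S) \<le> tau w"
      using arg_min_least[OF \<open>finite S\<close> \<open>S \<noteq> {}\<close>] by blast
    ultimately show ?thesis using that by blast
  qed
  have sI: "s \<in> {1..n}" "x < s" using sS S_def xI by auto
  have srl: "s \<in> rl_min_pos tau n" unfolding rl_min_pos_def
  proof (intro CollectI conjI ballI)
    show "s \<in> {1..n}" using sI by simp
    fix j assume j: "j \<in> {s<..n}"
    then have "tau s \<le> tau j" using smin S_def sI by auto
    moreover have "s \<noteq> j" using j by simp
    then have "tau s \<noteq> tau j" using inj by (auto dest: injD)
    ultimately show "tau s < tau j" by simp
  qed
  have sP: "s \<in> P" unfolding P_def using srl sI assms(2) by auto
  have xlt: "tau x < tau y" if "y \<in> {x<..n}" for y using xrl that unfolding rl_min_pos_def by auto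
  have ERx: "earlier_right tau n x = {}" unfolding earlier_right_def
  proof (rule equals0I)
    fix y assume "y \<in> {y \<in> {1..n}. x < y \<and> tau y < tau x}"
    then have "y \<in> {x<..n}" "tau y < tau x" by auto
    then show False using xlt[of y] by simp
  qed
  have finL: "finite (earlier_left tau n s)" unfolding earlier_left_def by auto
  have xL: "x \<in> earlier_left tau n s" unfolding earlier_left_def using xI sI xlt by auto
  have maxL: "Max (earlier_left tau n s) = x"
  proof (rule Max_eqI[OF finL _ xL])
    fix w assume w: "w \<in> earlier_left tau n s"
    show "w \<le> x"
    proof (rule ccontr)
      assume "\<not> w \<le> x"
      then have "w \<in> S" using w S_def unfolding earlier_left_def by auto
      then show False using smin w unfolding earlier_left_def by fastforce
    qed
  qed
  have edge: "gn_edge tau n x s" unfolding gn_edge_def ins_link_def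
    using xI sI xL maxL by blast
  have bound: "\<forall>z. gn_edge tau n x z \<longrightarrow> z \<le> s"
  proof (intro allI impI)
    fix z assume ez: "gn_edge tau n x z"
    show "z \<le> s"
    proof (rule ccontr)
      assume zs: "\<not> z \<le> s"
      then have "x < z" using sI by simp
      from up_edge[OF this ez] have h: "\<forall>w. x < w \<and> w < z \<longrightarrow> \<not> tau w < tau z"
        using ERx by blast
      have "z \<le> n" using ez unfolding gn_edge_def by auto
      then have "tau s < tau z" using srl zs unfolding rl_min_pos_def by auto
      then show False using h sI zs by auto
    qed
  qed
  have gs: "greedy_step tau n x = s"
    using greedy_step_eq[OF assms(3) sI(1) edge bound] .
  have minP: "\<forall>t\<in>P. x < t \<longrightarrow> s \<le> t"
  proof (intro ballI impI)
    fix t assume t: "t \<in> P" "x < t"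
    then have "t \<notin> lr_min_pos tau n" using lr_le_m assms(2) by fastforce
    then have trl: "t \<in> rl_min_pos tau n" using t P_def by auto
    show "s \<le> t"
    proof (rule ccontr)
      assume "\<not> s \<le> t"
      then have "tau t < tau s" using trl sI unfolding rl_min_pos_def by auto
      moreover have "t \<in> S" using t trl S_def unfolding rl_min_pos_def by auto
      ultimately show False using smin by fastforce
    qed
  qed
  show ?thesis using sP sI gs minP by blast
qed

lemma step:
  assumes "x \<in> P" "x \<noteq> n"
  shows "\<exists>y\<in>P. x < y \<and> greedy_step tau n x = y \<and> (\<forall>t\<in>P. x < t \<longrightarrow> y \<le> t)"
proof (cases "m \<le> x")
  case True then show ?thesis using case2 assms by blast
next
  case False
  then have "x \<in> lr_min_pos tau n" "x \<noteq> m" using assms(1) unfolding P_def by auto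
  then show ?thesis using case1 by blast
qed


lemma fin_lr: "finite (lr_min_pos tau n)" unfolding lr_min_pos_def by auto
lemma fin_rl: "finite (rl_min_pos tau n)" unfolding rl_min_pos_def by auto
lemma fin_RP: "finite {i \<in> rl_min_pos tau n. m < i}" using fin_rl by auto

definition path where "path = sorted_list_of_set (lr_min_pos tau n)
                    @ sorted_list_of_set {i \<in> rl_min_pos tau n. m < i}"

lemma path_set: "set path = P"
  unfolding path_def P_def using fin_lr fin_RP by simp

lemma path_sorted: "sorted_wrt (<) path"
  unfolding path_def sorted_wrt_append
proof (intro conjI)
  show "sorted_wrt (<) (sorted_list_of_set (lr_min_pos tau n))"
    by (rule strict_sorted_list_of_set)
  show "sorted_wrt (<) (sorted_list_of_set {i \<in> rl_min_pos tau n. m < i})"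
    by (rule strict_sorted_list_of_set)
  show "\<forall>x\<in>set (sorted_list_of_set (lr_min_pos tau n)).
        \<forall>y\<in>set (sorted_list_of_set {i \<in> rl_min_pos tau n. m < i}). x < y"
    using fin_lr fin_RP lr_le_m by fastforce
qed

lemma path_le: "i \<le> j \<Longrightarrow> j < length path \<Longrightarrow> path ! i \<le> path ! j"
  using sorted_wrt_nth_less[OF path_sorted, of i j] by (cases "i = j") auto

lemma path_lt: "i < j \<Longrightarrow> j < length path \<Longrightarrow> path ! i < path ! j"
  using sorted_wrt_nth_less[OF path_sorted, of i j] by auto

lemma path_in: "k < length path \<Longrightarrow> path ! k \<in> {1..n}"
  using path_set P_sub nth_mem by blast

lemma len_pos: "0 < length path"
  using path_set one_lr P_def by (cases path) auto

lemma path_last: "path ! (length path - 1) = n"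
proof -
  have "n \<in> set path" using path_set n_rl P_def m_lr mI by (cases "m < n") auto
  then obtain j where j: "j < length path" "path ! j = n" by (metis in_set_conv_nth)
  have "path ! j \<le> path ! (length path - 1)" using j path_le[of j "length path - 1"] by simp
  moreover have "path ! (length path - 1) \<le> n" using path_in len_pos by simp
  ultimately show ?thesis using j by simp
qed

lemma path_first: "path ! 0 = 1"
proof -
  have "1 \<in> set path" using path_set one_lr P_def by auto
  then obtain j where j: "j < length path" "path ! j = 1" by (metis in_set_conv_nth)
  have "path ! 0 \<le> path ! j" using j path_le[of 0 j] by simp
  moreover have "1 \<le> path ! 0" using path_in len_pos by simp
  ultimately show ?thesis using j by simp
qed

lemma walk: "k < length path \<Longrightarrow> greedy_walk tau n k = path ! k"
proof (induction k)
  case 0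
  then show ?case using path_first unfolding greedy_walk_def by simp
next
  case (Suc k)
  then have IH: "greedy_walk tau n k = path ! k" by simp
  have lt: "path ! k < path ! Suc k" using path_lt Suc.prems by simp
  have "path ! Suc k \<le> n" using path_in Suc.prems by simp
  then have xn: "path ! k \<noteq> n" using lt by simp
  have xP: "path ! k \<in> P" using path_set Suc.prems by (metis Suc_lessD nth_mem)
  obtain y where y: "y \<in> P" "path ! k < y" "greedy_step tau n (path ! k) = y"
    "\<forall>t\<in>P. path ! k < t \<longrightarrow> y \<le> t" using step[OF xP xn] by blast
  have "path ! Suc k \<in> P" using path_set Suc.prems by (metis nth_mem)
  then have le1: "y \<le> path ! Suc k" using y(4) lt by blast
  obtain j where j: "j < length path" "path ! j = y" using y(1) path_set by (metis in_set_conv_nth)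
  have "\<not> j \<le> k" using path_le[of j k] j y(2) Suc.prems by auto
  then have "Suc k \<le> j" by simp
  then have "path ! Suc k \<le> y" using path_le j by metis
  then have "y = path ! Suc k" using le1 by simp
  moreover have "greedy_walk tau n (Suc k) = greedy_step tau n (greedy_walk tau n k)"
    unfolding greedy_walk_def by simp
  ultimately show ?case using IH y(3) by simp
qed

lemma main:
  "(\<forall>k < length path. greedy_walk tau n k = path ! k)
            \<and> greedy_steps tau n = length path - 1
            \<and> greedy_walk tau n (length path - 1) = n
            \<and> (\<forall>k < length path - 1. greedy_walk tau n k \<noteq> n)
            \<and> int (greedy_steps tau n) = int (L_num tau n) + int (R_num tau n) - 2"
proof -
  have w: "\<forall>k < length path. greedy_walk tau n k = path ! k" using walk by blast
  have last: "greedy_walk tau n (length path - 1) = n" using walk path_last len_pos by simp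
  have notn: "\<forall>k < length path - 1. greedy_walk tau n k \<noteq> n"
  proof (intro allI impI)
    fix k assume k: "k < length path - 1"
    then have "path ! k < path ! (length path - 1)" using path_lt by simp
    then show "greedy_walk tau n k \<noteq> n" using walk k path_last by simp
  qed
  have steps: "greedy_steps tau n = length path - 1"
    unfolding greedy_steps_def
  proof (rule Least_equality)
    show "greedy_walk tau n (length path - 1) = n" by (rule last)
    fix k assume "greedy_walk tau n k = n"
    then show "length path - 1 \<le> k" using notn by (meson not_le)
  qed
  have len: "length path = L_num tau n + card {i \<in> rl_min_pos tau n. m < i}"
    unfolding path_def L_num_def by simp
  have "rl_min_pos tau n = insert m {i \<in> rl_min_pos tau n. m < i}"
    using m_rl rl_ge_m by fastforce
  then have R: "R_num tau n = card {i \<in> rl_min_pos tau n. m < i} + 1"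
    unfolding R_num_def using fin_RP by (metis (no_types, lifting) Suc_eq_plus1 card_insert_disjoint
      less_irrefl mem_Collect_eq)
  have "L_num tau n \<ge> 1" unfolding L_num_def using fin_lr one_lr
    by (metis One_nat_def Suc_leI card_gt_0_iff empty_iff)
  then have "int (greedy_steps tau n) = int (L_num tau n) + int (R_num tau n) - 2"
    using steps len R by simp
  then show ?thesis using w last notn steps by blast
qed

end

theorem theorem1:
  fixes n m :: nat and tau :: "nat \<Rightarrow> nat"
  assumes "n \<ge> 2"
    and "tau permutes {1..n}"
    and "m \<in> {1..n}" and "tau m = 1"
  shows "let path = sorted_list_of_set (lr_min_pos tau n)
                    @ sorted_list_of_set {i \<in> rl_min_pos tau n. m < i}
         in (\<forall>k < length path. greedy_walk tau n k = path ! k)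
            \<and> greedy_steps tau n = length path - 1
            \<and> greedy_walk tau n (length path - 1) = n
            \<and> (\<forall>k < length path - 1. greedy_walk tau n k \<noteq> n)
            \<and> int (greedy_steps tau n) = int (L_num tau n) + int (R_num tau n) - 2"
proof -
  interpret gw n m tau using assms by unfold_locales
  show ?thesis using main unfolding path_def Let_def .
qed

end
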